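(* Let $X$ be a proper geodesic metric space, $e\in X$ and $N$ a Morse gauge. There exists a constant $K'>0$, depending only on $N$, such that if $\gamma,\gamma'$ are limit geodesics for the same pair of distinct endpoints $\lambda^-,\lambda^+\in\partial X^{(N)}_e$ (possibly arising from different sequences and choices), then $d_{Haus}(\gamma,\gamma')<K'$.
   Context: A Morse gauge is a function $N:\mathbb{R}_{\geq 1}\times\mathbb{R}_{\geq 0}\to\mathbb{R}_{\geq 0}$; a (quasi)geodesic is $N$-Morse if every $(K,C)$-quasigeodesic with endpoints on it lies in its $N(K,C)$-neighborhood. $X^{(N)}_e$ is the set of $y\in X$ such that some geodesic $[e,y]$ is $N$-Morse; $\partial X^{(N)}_e$ is its sequential Gromov boundary. Limit geodesics: given $(x_n),(y_n)\subset X^{(N)}_e$ converging at infinity to $\lambda^-\neq\lambda^+\in\partial X^{(N)}_e$, choose $N$-Morse geodesics $[e,x_n],[e,y_n]$; they subsequentially converge uniformly on compact sets to geodesic rays $\gamma_x,\gamma_y$ from $e$ (limit legs). For each $n$ let $\gamma_n$ be a geodesic from $\gamma_x(n)$ to $\gamma_y(n)$; any biinfinite geodesic $\gamma$ which is a uniform-on-compacts subsequential limit of $(\gamma_n)$ is a limit geodesic for $\lambda^-,\lambda^+$. *)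

theory Defs
  imports "HOL-Analysis.Analysis"
begin

definition proper_mspace :: "'a set \<Rightarrow> ('a \<Rightarrow> 'a \<Rightarrow> real) \<Rightarrow> bool" where
  "proper_mspace M d \<longleftrightarrow>
     (\<forall>x\<in>M. \<forall>r. compactin (Metric_space.mtopology M d) (Metric_space.mcball M d x r))"

definition geodesic_on :: "'a set \<Rightarrow> ('a \<Rightarrow> 'a \<Rightarrow> real) \<Rightarrow> real set \<Rightarrow> (real \<Rightarrow> 'a) \<Rightarrow> bool" where
  "geodesic_on M d I p \<longleftrightarrow> p ` I \<subseteq> M \<and> (\<forall>s\<in>I. \<forall>t\<in>I. d (p s) (p t) = \<bar>s - t\<bar>)"

definition geodesic_segment :: "'a set \<Rightarrow> ('a \<Rightarrow> 'a \<Rightarrow> real) \<Rightarrow> real \<Rightarrow> real \<Rightarrow> (real \<Rightarrow> 'a) \<Rightarrow> 'a \<Rightarrow> 'a \<Rightarrow> bool" where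
  "geodesic_segment M d a b p x y \<longleftrightarrow> a \<le> b \<and> geodesic_on M d {a..b} p \<and> p a = x \<and> p b = y"

definition geodesic_mspace :: "'a set \<Rightarrow> ('a \<Rightarrow> 'a \<Rightarrow> real) \<Rightarrow> bool" where
  "geodesic_mspace M d \<longleftrightarrow> (\<forall>x\<in>M. \<forall>y\<in>M. \<exists>p. geodesic_segment M d 0 (d x y) p x y)"

definition geodesic_ray :: "'a set \<Rightarrow> ('a \<Rightarrow> 'a \<Rightarrow> real) \<Rightarrow> (real \<Rightarrow> 'a) \<Rightarrow> 'a \<Rightarrow> bool" where
  "geodesic_ray M d r e \<longleftrightarrow> geodesic_on M d {0..} r \<and> r 0 = e"

definition biinfinite_geodesic :: "'a set \<Rightarrow> ('a \<Rightarrow> 'a \<Rightarrow> real) \<Rightarrow> (real \<Rightarrow> 'a) \<Rightarrow> bool" where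
  "biinfinite_geodesic M d g \<longleftrightarrow> geodesic_on M d UNIV g"

text \<open>(K,C)-quasigeodesic on [a,b] (not required to be continuous).\<close>
definition quasigeodesic :: "'a set \<Rightarrow> ('a \<Rightarrow> 'a \<Rightarrow> real) \<Rightarrow> real \<Rightarrow> real \<Rightarrow> real \<Rightarrow> real \<Rightarrow> (real \<Rightarrow> 'a) \<Rightarrow> bool" where
  "quasigeodesic M d K C a b q \<longleftrightarrow> a \<le> b \<and> q ` {a..b} \<subseteq> M \<and>
     (\<forall>s\<in>{a..b}. \<forall>t\<in>{a..b}. \<bar>s - t\<bar> / K - C \<le> d (q s) (q t) \<and> d (q s) (q t) \<le> K * \<bar>s - t\<bar> + C)"

definition mnbhd :: "'a set \<Rightarrow> ('a \<Rightarrow> 'a \<Rightarrow> real) \<Rightarrow> real \<Rightarrow> 'a set \<Rightarrow> 'a set" where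
  "mnbhd M d r S = {x\<in>M. \<exists>y\<in>S. d x y \<le> r}"

definition morse_gauge :: "(real \<Rightarrow> real \<Rightarrow> real) \<Rightarrow> bool" where
  "morse_gauge N \<longleftrightarrow> (\<forall>K\<ge>1. \<forall>C\<ge>0. N K C \<ge> 0)"

definition morse_set :: "'a set \<Rightarrow> ('a \<Rightarrow> 'a \<Rightarrow> real) \<Rightarrow> (real \<Rightarrow> real \<Rightarrow> real) \<Rightarrow> 'a set \<Rightarrow> bool" where
  "morse_set M d N S \<longleftrightarrow>
     (\<forall>K C a b q. K \<ge> 1 \<longrightarrow> C \<ge> 0 \<longrightarrow> quasigeodesic M d K C a b q \<longrightarrow>
        q a \<in> S \<longrightarrow> q b \<in> S \<longrightarrow> q ` {a..b} \<subseteq> mnbhd M d (N K C) S)"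

definition morse_geodesic_from :: "'a set \<Rightarrow> ('a \<Rightarrow> 'a \<Rightarrow> real) \<Rightarrow> (real \<Rightarrow> real \<Rightarrow> real) \<Rightarrow> 'a \<Rightarrow> 'a \<Rightarrow> (real \<Rightarrow> 'a) \<Rightarrow> bool" where
  "morse_geodesic_from M d N e y p \<longleftrightarrow>
     geodesic_segment M d 0 (d e y) p e y \<and> morse_set M d N (p ` {0..d e y})"

definition morse_stratum :: "'a set \<Rightarrow> ('a \<Rightarrow> 'a \<Rightarrow> real) \<Rightarrow> (real \<Rightarrow> real \<Rightarrow> real) \<Rightarrow> 'a \<Rightarrow> 'a set" where
  "morse_stratum M d N e = {y\<in>M. \<exists>p. morse_geodesic_from M d N e y p}"

definition gromov_product :: "('a \<Rightarrow> 'a \<Rightarrow> real) \<Rightarrow> 'a \<Rightarrow> 'a \<Rightarrow> 'a \<Rightarrow> real" where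
  "gromov_product d e x y = (d e x + d e y - d x y) / 2"

definition converges_at_infinity :: "('a \<Rightarrow> 'a \<Rightarrow> real) \<Rightarrow> 'a \<Rightarrow> (nat \<Rightarrow> 'a) \<Rightarrow> bool" where
  "converges_at_infinity d e x \<longleftrightarrow>
     (\<forall>R. \<exists>n0. \<forall>i\<ge>n0. \<forall>j\<ge>n0. gromov_product d e (x i) (x j) \<ge> R)"

definition equiv_at_infinity :: "('a \<Rightarrow> 'a \<Rightarrow> real) \<Rightarrow> 'a \<Rightarrow> (nat \<Rightarrow> 'a) \<Rightarrow> (nat \<Rightarrow> 'a) \<Rightarrow> bool" where
  "equiv_at_infinity d e x y \<longleftrightarrow>
     (\<forall>R. \<exists>n0. \<forall>i\<ge>n0. \<forall>j\<ge>n0. gromov_product d e (x i) (y j) \<ge> R)"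

definition stratum_seqs_at_infinity :: "'a set \<Rightarrow> ('a \<Rightarrow> 'a \<Rightarrow> real) \<Rightarrow> (real \<Rightarrow> real \<Rightarrow> real) \<Rightarrow> 'a \<Rightarrow> (nat \<Rightarrow> 'a) set" where
  "stratum_seqs_at_infinity M d N e =
     {x. range x \<subseteq> morse_stratum M d N e \<and> converges_at_infinity d e x}"

definition morse_boundary :: "'a set \<Rightarrow> ('a \<Rightarrow> 'a \<Rightarrow> real) \<Rightarrow> (real \<Rightarrow> real \<Rightarrow> real) \<Rightarrow> 'a \<Rightarrow> (nat \<Rightarrow> 'a) set set" where
  "morse_boundary M d N e =
     {{y\<in>stratum_seqs_at_infinity M d N e. equiv_at_infinity d e x y} | x.
        x \<in> stratum_seqs_at_infinity M d N e}"

definition segs_converge_to_ray :: "('a \<Rightarrow> 'a \<Rightarrow> real) \<Rightarrow> (nat \<Rightarrow> real) \<Rightarrow> (nat \<Rightarrow> real \<Rightarrow> 'a) \<Rightarrow> (real \<Rightarrow> 'a) \<Rightarrow> bool" where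
  "segs_converge_to_ray d L p r \<longleftrightarrow>
     (\<forall>T\<ge>0. \<forall>\<epsilon>>0. \<exists>n0. \<forall>n\<ge>n0. T \<le> L n \<and> (\<forall>t\<in>{0..T}. d (p n t) (r t) < \<epsilon>))"

definition segs_converge_to_line :: "('a \<Rightarrow> 'a \<Rightarrow> real) \<Rightarrow> (nat \<Rightarrow> real) \<Rightarrow> (nat \<Rightarrow> real) \<Rightarrow> (nat \<Rightarrow> real \<Rightarrow> 'a) \<Rightarrow> (real \<Rightarrow> 'a) \<Rightarrow> bool" where
  "segs_converge_to_line d A B g g0 \<longleftrightarrow>
     (\<forall>T\<ge>0. \<forall>\<epsilon>>0. \<exists>n0. \<forall>n\<ge>n0. A n \<le> -T \<and> T \<le> B n \<and> (\<forall>t\<in>{-T..T}. d (g n t) (g0 t) < \<epsilon>))"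

definition limit_geodesic :: "'a set \<Rightarrow> ('a \<Rightarrow> 'a \<Rightarrow> real) \<Rightarrow> (real \<Rightarrow> real \<Rightarrow> real) \<Rightarrow> 'a \<Rightarrow>
    (nat \<Rightarrow> 'a) set \<Rightarrow> (nat \<Rightarrow> 'a) set \<Rightarrow> (real \<Rightarrow> 'a) \<Rightarrow> bool" where
  "limit_geodesic M d N e Lm Lp g0 \<longleftrightarrow>
     (\<exists>x y \<alpha> \<beta> \<phi> rx ry A B g \<psi>.
        x \<in> Lm \<and> y \<in> Lp \<and>
        (\<forall>n. morse_geodesic_from M d N e (x n) (\<alpha> n)) \<and>
        (\<forall>n. morse_geodesic_from M d N e (y n) (\<beta> n)) \<and>
        strict_mono \<phi> \<and>
        geodesic_ray M d rx e \<and> geodesic_ray M d ry e \<and>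
        segs_converge_to_ray d (\<lambda>n. d e (x (\<phi> n))) (\<lambda>n. \<alpha> (\<phi> n)) rx \<and>
        segs_converge_to_ray d (\<lambda>n. d e (y (\<phi> n))) (\<lambda>n. \<beta> (\<phi> n)) ry \<and>
        (\<forall>n. geodesic_segment M d (A n) (B n) (g n) (rx (real n)) (ry (real n))) \<and>
        strict_mono \<psi> \<and>
        biinfinite_geodesic M d g0 \<and>
        segs_converge_to_line d (\<lambda>n. A (\<psi> n)) (\<lambda>n. B (\<psi> n)) (\<lambda>n. g (\<psi> n)) g0)"

definition mhausdist :: "('a \<Rightarrow> 'a \<Rightarrow> real) \<Rightarrow> 'a set \<Rightarrow> 'a set \<Rightarrow> ereal" where
  "mhausdist d S T = max (SUP s\<in>S. INF t\<in>T. ereal (d s t)) (SUP t\<in>T. INF s\<in>S. ereal (d s t))"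

end

theory Submission
  imports Defs
begin



context Metric_space begin

lemma geo_d: "geodesic_on M d I p \<Longrightarrow> s\<in>I \<Longrightarrow> t\<in>I \<Longrightarrow> d (p s) (p t) = \<bar>s-t\<bar>"
  unfolding geodesic_on_def by blast

lemma geo_M: "geodesic_on M d I p \<Longrightarrow> s\<in>I \<Longrightarrow> p s \<in> M"
  unfolding geodesic_on_def by blast

lemma geo_rev: "geodesic_on M d {u0..u1} h \<Longrightarrow> geodesic_on M d {-u1..-u0} (\<lambda>u. h (-u))"
  unfolding geodesic_on_def
  by (auto simp: image_subset_iff)

lemma closest:
  assumes g: "geodesic_on M d {u0..u1} h" and le: "u0 \<le> u1" and e: "e \<in> M"
  shows "\<exists>up\<in>{u0..u1}. \<forall>u\<in>{u0..u1}. d e (h up) \<le> d e (h u)"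
proof -
  have c: "continuous_on {u0..u1} (\<lambda>u. d e (h u))"
    unfolding continuous_on_iff
  proof (intro ballI allI impI)
    fix x and ee::real assume x: "x \<in> {u0..u1}" and ee: "ee > 0"
    show "\<exists>dd>0. \<forall>x'\<in>{u0..u1}. dist x' x < dd \<longrightarrow> dist (d e (h x')) (d e (h x)) < ee"
    proof (intro exI[of _ ee] conjI ballI impI)
      fix x' assume x': "x' \<in> {u0..u1}" and dx: "dist x' x < ee"
      have m1: "h x \<in> M" "h x' \<in> M" using geo_M[OF g] x x' by auto
      have "d (h x') (h x) = \<bar>x' - x\<bar>" using geo_d[OF g x' x] .
      moreover have "d e (h x') \<le> d e (h x) + d (h x) (h x')" using triangle[OF e m1(1) m1(2)] .
      moreover have "d e (h x) \<le> d e (h x') + d (h x') (h x)" using triangle[OF e m1(2) m1(1)] .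
      moreover have "d (h x) (h x') = d (h x') (h x)" using commute by simp
      ultimately show "dist (d e (h x')) (d e (h x)) < ee" using dx
        by (simp add: dist_real_def abs_le_iff)
    qed (use ee in auto)
  qed
  show ?thesis
    using continuous_attains_inf[OF compact_Icc _ c] le by auto
qed

end



context Metric_space begin

lemma qg_core:
  assumes e: "e \<in> M"
    and gh: "geodesic_on M d {u0..u1} h" and up: "up \<in> {u0..u1}"
    and clo: "\<forall>u\<in>{u0..u1}. d e (h up) \<le> d e (h u)"
    and gc: "geodesic_segment M d 0 (d e (h up)) c e (h up)"
    and q0: "q0 = (\<lambda>t. if t \<le> d e (h up) then c t else h (up - (t - d e (h up))))"
    and b: "b = d e (h up) + (up - u0)"
    and st: "s \<in> {0..b}" "t \<in> {0..b}" "s \<le> t"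
  shows "\<bar>s-t\<bar>/3 \<le> d (q0 s) (q0 t) \<and> d (q0 s) (q0 t) \<le> \<bar>s-t\<bar>"
proof -
  define l where "l = d e (h up)"
  have l0: "l \<ge> 0" unfolding l_def by simp
  have gc': "geodesic_on M d {0..l} c" "c 0 = e" "c l = h up"
    using gc unfolding geodesic_segment_def l_def by auto
  have hside: "\<And>r. r \<in> {l..b} \<Longrightarrow> q0 r = h (up - (r - l))"
    using gc'(3) unfolding q0 l_def by auto
  have hpar: "\<And>r. r \<in> {l..b} \<Longrightarrow> up - (r - l) \<in> {u0..u1}"
    using up unfolding b l_def by auto
  show ?thesis
  proof (cases "t \<le> l")
    case True
    then have "q0 s = c s" "q0 t = c t" using st unfolding q0 l_def by auto
    moreover have "d (c s) (c t) = \<bar>s - t\<bar>" using geo_d[OF gc'(1)] st True by auto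
    ultimately show ?thesis by simp
  next
    case tl: False
    show ?thesis
    proof (cases "l \<le> s")
      case True
      have "d (q0 s) (q0 t) = \<bar>(up - (s - l)) - (up - (t - l))\<bar>"
        using hside[of s] hside[of t] geo_d[OF gh hpar[of s] hpar[of t]] st True tl by auto
      then show ?thesis by (simp add: abs_minus_commute)
    next
      case sl: False
      have xs: "q0 s = c s" using sl unfolding q0 l_def by auto
      have yt: "q0 t = h (up - (t - l))" using hside[of t] st tl by auto
      have vin: "up - (t - l) \<in> {u0..u1}" using hpar[of t] st tl by auto
      define x where "x = c s"
      define y where "y = h (up - (t - l))"
      have xM: "x \<in> M" unfolding x_def using geo_M[OF gc'(1)] st sl by auto
      have yM: "y \<in> M" unfolding y_def using geo_M[OF gh vin] .
      have pM: "h up \<in> M" using geo_M[OF gh up] .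
      have dex: "d e x = s" unfolding x_def using geo_d[OF gc'(1), of 0 s] gc'(2) st sl by auto
      have dxp: "d x (h up) = l - s" unfolding x_def using geo_d[OF gc'(1), of s l] gc'(3) st sl l0 by auto
      have dpy: "d (h up) y = t - l" unfolding y_def using geo_d[OF gh up vin] tl by auto
      have dey0: "d e (h up) \<le> d e (h (up - (t - l)))" using clo vin by blast
      have dey: "d e y \<ge> l" using dey0 unfolding y_def l_def by simp
      have t1: "d e y \<le> d e x + d x y" using triangle[OF e xM yM] .
      have t2: "d (h up) y \<le> d (h up) x + d x y" using triangle[OF pM xM yM] .
      have t3: "d x y \<le> d x (h up) + d (h up) y" using triangle[OF xM pM yM] .
      have cm: "d (h up) x = d x (h up)" using commute by simp
      have "\<bar>s-t\<bar>/3 \<le> d x y \<and> d x y \<le> \<bar>s-t\<bar>"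
        using t1 t2 t3 cm dex dxp dpy dey st by (auto simp: abs_if) 
      then show ?thesis using xs yt unfolding x_def y_def by simp
    qed
  qed
qed

lemma side:
  assumes e: "e \<in> M"
    and ms: "morse_set M d N S" and SM: "S \<subseteq> M" and eS: "e \<in> S"
    and gh: "geodesic_on M d {u0..u1} h" and up: "up \<in> {u0..u1}"
    and clo: "\<forall>u\<in>{u0..u1}. d e (h up) \<le> d e (h u)"
    and gc: "geodesic_segment M d 0 (d e (h up)) c e (h up)"
    and w: "w \<in> S" and dw: "d w (h u0) \<le> 1"
    and N0: "N 3 1 \<ge> 0"
  shows "(\<forall>u\<in>{u0..up}. \<exists>y\<in>S. d (h u) y \<le> N 3 1 + 1) \<and>
         (\<forall>t\<in>{0..d e (h up)}. \<exists>y\<in>S. d (c t) y \<le> N 3 1 + 1)"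
proof -
  define l where "l = d e (h up)"
  define b where "b = l + (up - u0)"
  define q0 where "q0 = (\<lambda>t. if t \<le> l then c t else h (up - (t - l)))"
  define q where "q = (\<lambda>t. if t = b then w else q0 t)"
  have l0: "l \<ge> 0" unfolding l_def by simp
  have b0: "0 \<le> b" using up l0 unfolding b_def by auto
  have gc': "geodesic_on M d {0..l} c" "c 0 = e" "c l = h up"
    using gc unfolding geodesic_segment_def l_def by auto
  have core: "\<And>s t. s \<in> {0..b} \<Longrightarrow> t \<in> {0..b} \<Longrightarrow>
      \<bar>s-t\<bar>/3 \<le> d (q0 s) (q0 t) \<and> d (q0 s) (q0 t) \<le> \<bar>s-t\<bar>"
  proof -
    fix s t assume s: "s \<in> {0..b}" and t: "t \<in> {0..b}"
    show "\<bar>s-t\<bar>/3 \<le> d (q0 s) (q0 t) \<and> d (q0 s) (q0 t) \<le> \<bar>s-t\<bar>"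
    proof (cases "s \<le> t")
      case True
      then show ?thesis using qg_core[OF e gh up clo gc _ _ s t] q0_def b_def l_def by blast
    next
      case False
      then have "\<bar>t-s\<bar>/3 \<le> d (q0 t) (q0 s) \<and> d (q0 t) (q0 s) \<le> \<bar>t-s\<bar>"
        using qg_core[OF e gh up clo gc _ _ t s] q0_def b_def l_def by auto
      then show ?thesis using commute by (simp add: abs_minus_commute)
    qed
  qed
  have q0M: "\<And>t. t \<in> {0..b} \<Longrightarrow> q0 t \<in> M"
    using geo_M[OF gc'(1)] geo_M[OF gh] up unfolding q0_def b_def by auto
  have q0b: "q0 b = h u0"
    using gc'(3) up unfolding q0_def b_def by auto
  have wM: "w \<in> M" using w SM by auto
  have h0M: "h u0 \<in> M" using geo_M[OF gh] up by auto
  have qg: "quasigeodesic M d 3 1 0 b q"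
    unfolding quasigeodesic_def
  proof (intro conjI ballI)
    show "0 \<le> b" by (rule b0)
    show "q ` {0..b} \<subseteq> M" using q0M wM unfolding q_def by auto
  next
    fix s t assume s: "s \<in> {0..b}" and t: "t \<in> {0..b}"
    have cst: "\<bar>s-t\<bar>/3 \<le> d (q0 s) (q0 t) \<and> d (q0 s) (q0 t) \<le> \<bar>s-t\<bar>" using core[OF s t] .
    have pert: "\<And>r. r \<in> {0..b} \<Longrightarrow> \<bar>d w (q0 r) - d (h u0) (q0 r)\<bar> \<le> 1"
    proof -
      fix r assume r: "r \<in> {0..b}"
      have "d w (q0 r) \<le> d w (h u0) + d (h u0) (q0 r)" using triangle[OF wM h0M q0M[OF r]] .
      moreover have "d (h u0) (q0 r) \<le> d (h u0) w + d w (q0 r)" using triangle[OF h0M wM q0M[OF r]] .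
      moreover have "d (h u0) w = d w (h u0)" using commute by simp
      ultimately show "\<bar>d w (q0 r) - d (h u0) (q0 r)\<bar> \<le> 1" using dw by auto
    qed
    have "\<bar>s-t\<bar>/3 - 1 \<le> d (q s) (q t) \<and> d (q s) (q t) \<le> \<bar>s-t\<bar> + 1"
    proof (cases "s = b")
      case sb: True
      show ?thesis
      proof (cases "t = b")
        case True then show ?thesis using sb wM by (simp add: q_def)
      next
        case False
        then have e1: "d (q s) (q t) = d w (q0 t)" using sb by (auto simp: q_def)
        have e2: "d (q0 s) (q0 t) = d (h u0) (q0 t)" using sb q0b by simp
        show ?thesis using pert[OF t] cst e1 e2 by linarith
      qed
    next
      case snb: False
      show ?thesis
      proof (cases "t = b")
        case True
        then have e1: "d (q s) (q t) = d w (q0 s)" using snb commute by (auto simp: q_def)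
        have e2: "d (q0 s) (q0 t) = d (h u0) (q0 s)" using True q0b commute by simp
        show ?thesis using pert[OF s] cst e1 e2 by linarith
      next
        case False
        then show ?thesis using snb cst by (auto simp: q_def)
      qed
    qed
    then have A: "\<bar>s-t\<bar>/3 - 1 \<le> d (q s) (q t)" and B: "d (q s) (q t) \<le> \<bar>s-t\<bar> + 1" by auto
    have B': "d (q s) (q t) \<le> 3 * \<bar>s - t\<bar> + 1" using B abs_ge_zero[of "s-t"] by (smt (verit))
    show "\<bar>s - t\<bar> / 3 - 1 \<le> d (q s) (q t)" using A by blast
    show "d (q s) (q t) \<le> 3 * \<bar>s - t\<bar> + 1" using B' by blast
  qed
  have qa: "q 0 \<in> S"
    using eS w gc'(2) l0 unfolding q_def q0_def by auto
  have qb: "q b \<in> S" using w unfolding q_def by auto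
  have nb: "q ` {0..b} \<subseteq> mnbhd M d (N 3 1) S"
    using ms qg qa qb unfolding morse_set_def by auto
  have nbq: "\<And>t. t \<in> {0..b} \<Longrightarrow> \<exists>y\<in>S. d (q t) y \<le> N 3 1"
    using nb unfolding mnbhd_def by blast
  have wclose: "\<exists>y\<in>S. d (h u0) y \<le> N 3 1 + 1"
    using w dw commute[of w "h u0"] N0 by (intro bexI[of _ w]) auto
  show ?thesis
  proof (intro conjI ballI)
    fix u assume u: "u \<in> {u0..up}"
    define t where "t = l + (up - u)"
    have t: "t \<in> {0..b}" using u l0 unfolding t_def b_def by auto
    show "\<exists>y\<in>S. d (h u) y \<le> N 3 1 + 1"
    proof (cases "t = b")
      case True
      then have "u = u0" unfolding t_def b_def by auto
      then show ?thesis using wclose by simp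
    next
      case False
      have "q t = h u"
      proof (cases "t \<le> l")
        case True
        then have "u = up" using u unfolding t_def by auto
        then show ?thesis using False True gc'(3) unfolding q_def q0_def t_def by auto
      next
        case tl: False
        then show ?thesis using False unfolding q_def q0_def t_def by auto
      qed
      then show ?thesis using nbq[OF t] by (smt (verit))
    qed
  next
    fix t assume t: "t \<in> {0..d e (h up)}"
    then have tl: "t \<le> l" "t \<in> {0..b}" unfolding l_def b_def using up by auto
    show "\<exists>y\<in>S. d (c t) y \<le> N 3 1 + 1"
    proof (cases "t = b")
      case True
      then have "t = l" "up = u0" using tl up unfolding b_def by auto
      then have "c t = h u0" using gc'(3) by simp
      then show ?thesis using wclose by simp
    next
      case False
      then have "q t = c t" using tl unfolding q_def q0_def by auto
      then show ?thesis using nbq[OF tl(2)] by (smt (verit))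
    qed
  qed
qed

end



lemma discrete_switch: "P 0 \<Longrightarrow> \<not> P n \<Longrightarrow> \<exists>i<n. P i \<and> \<not> P (Suc i)"
  apply (induction n)
   apply simp
  by (metis less_Suc_eq)

context Metric_space begin

lemma mgf_facts:
  assumes "morse_geodesic_from M d N e X a"
  shows "geodesic_on M d {0..d e X} a" "a 0 = e" "a (d e X) = X"
    "morse_set M d N (a ` {0..d e X})" "a ` {0..d e X} \<subseteq> M" "e \<in> a ` {0..d e X}"
    "\<And>s. s \<in> {0..d e X} \<Longrightarrow> d e (a s) = s"
proof -
  show g: "geodesic_on M d {0..d e X} a" "a 0 = e" "a (d e X) = X"
    "morse_set M d N (a ` {0..d e X})"
    using assms unfolding morse_geodesic_from_def geodesic_segment_def by auto
  show "a ` {0..d e X} \<subseteq> M" using g(1) unfolding geodesic_on_def by auto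
  show "e \<in> a ` {0..d e X}" using g(2) by (intro image_eqI[of _ _ 0]) auto
  fix s assume s: "s \<in> {0..d e X}"
  show "d e (a s) = s" using geo_d[OF g(1), of 0 s] s g(2) by auto
qed

lemma near_ray:
  assumes "morse_geodesic_from M d N e X a" and z: "z \<in> M"
    and sg: "\<sigma> \<in> {0..d e X}" and dz: "d z (a \<sigma>) \<le> r"
    and s: "s \<in> {0..d e X}" and ds: "\<bar>s - d e z\<bar> \<le> r'"
    and e: "e \<in> M"
  shows "d z (a s) \<le> 2*r + r'"
proof -
  note f = mgf_facts[OF assms(1)]
  have aM: "a \<sigma> \<in> M" "a s \<in> M" using f(5) sg s by auto
  have "d e (a \<sigma>) = \<sigma>" using f(7) sg by auto
  moreover have "d e (a \<sigma>) \<le> d e z + d z (a \<sigma>)" using triangle[OF e z aM(1)] .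
  moreover have "d e z \<le> d e (a \<sigma>) + d (a \<sigma>) z" using triangle[OF e aM(1) z] .
  moreover have "d (a \<sigma>) z = d z (a \<sigma>)" using commute by simp
  moreover have "d (a \<sigma>) (a s) = \<bar>\<sigma> - s\<bar>" using geo_d[OF f(1) sg s] .
  moreover have "d z (a s) \<le> d z (a \<sigma>) + d (a \<sigma>) (a s)" using triangle[OF z aM] .
  ultimately show ?thesis using dz ds by (auto simp: abs_le_iff)
qed

lemma fellow:
  assumes e: "e \<in> M" and gm: "geodesic_mspace M d" and N0: "N 3 1 \<ge> 0"
    and ma: "morse_geodesic_from M d N e X a" and mb: "morse_geodesic_from M d N e Z b"
    and s: "0 \<le> s" "s \<le> gromov_product d e X Z"
  shows "d (a s) (b s) \<le> 4 * (N 3 1 + 1)"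
proof -
  note fa = mgf_facts[OF ma] and fb = mgf_facts[OF mb]
  have XM: "X \<in> M" using fa(3,5) by (metis atLeastAtMost_iff image_subset_iff order_refl nonneg)
  have ZM: "Z \<in> M" using fb(3,5) by (metis atLeastAtMost_iff image_subset_iff order_refl nonneg)
  obtain h where h: "geodesic_segment M d 0 (d X Z) h X Z" using gm XM ZM unfolding geodesic_mspace_def by blast
  have gh: "geodesic_on M d {0..d X Z} h" and h0: "h 0 = X" and h1: "h (d X Z) = Z"
    using h unfolding geodesic_segment_def by auto
  obtain up where up: "up \<in> {0..d X Z}" and clo: "\<forall>u\<in>{0..d X Z}. d e (h up) \<le> d e (h u)"
    using closest[OF gh _ e] by auto
  have pM: "h up \<in> M" using geo_M[OF gh up] .
  obtain c where gc: "geodesic_segment M d 0 (d e (h up)) c e (h up)"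
    using gm e pM unfolding geodesic_mspace_def by blast
  have sa: "\<forall>t\<in>{0..d e (h up)}. \<exists>y\<in>a ` {0..d e X}. d (c t) y \<le> N 3 1 + 1"
    using side[OF e fa(4) fa(5) fa(6) gh up clo gc _ _ N0, of X] h0 fa(3) XM
    by (metis atLeastAtMost_iff image_eqI nonneg order_refl zero zero_le_one)
  have ghr: "geodesic_on M d {- d X Z..- 0} (\<lambda>u. h (-u))" using geo_rev[OF gh] .
  have upr: "-up \<in> {- d X Z..- 0}" using up by auto
  have clor: "\<forall>u\<in>{- d X Z..- 0}. d e (h (- (-up))) \<le> d e (h (-u))" using clo by auto
  have gcr: "geodesic_segment M d 0 (d e (h (- (-up)))) c e (h (- (-up)))" using gc by simp
  have sb: "\<forall>t\<in>{0..d e (h up)}. \<exists>y\<in>b ` {0..d e Z}. d (c t) y \<le> N 3 1 + 1"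
  proof -
    have "d Z (h (- (- d X Z))) \<le> 1" using h1 ZM by simp
    moreover have "Z \<in> b ` {0..d e Z}" using fb(3) by (intro image_eqI[of _ _ "d e Z"]) auto
    ultimately show ?thesis
      using side[OF e fb(4) fb(5) fb(6) ghr upr clor gcr, of Z] N0 by auto
  qed
  have gcc: "geodesic_on M d {0..d e (h up)} c" "c 0 = e" using gc unfolding geodesic_segment_def by auto
  have d1: "d X (h up) = up" using geo_d[OF gh, of 0 up] up h0 by auto
  have d2: "d (h up) Z = d X Z - up" using geo_d[OF gh, of up "d X Z"] up h1 by auto
  have t1: "d e X \<le> d e (h up) + d (h up) X" using triangle[OF e pM XM] .
  have t2: "d e Z \<le> d e (h up) + d (h up) Z" using triangle[OF e pM ZM] .
  have t3: "d e Z \<le> d e X + d X Z" using triangle[OF e XM ZM] .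
  have t4: "d e X \<le> d e Z + d Z X" using triangle[OF e ZM XM] .
  have cm: "d (h up) X = d X (h up)" "d Z X = d X Z" using commute by auto
  have gp: "gromov_product d e X Z = (d e X + d e Z - d X Z)/2" unfolding gromov_product_def by simp
  have sl: "s \<le> d e (h up)" "s \<le> d e X" "s \<le> d e Z" using s t1 t2 t3 t4 cm d1 d2 gp by auto
  have st: "s \<in> {0..d e (h up)}" using s sl by auto
  have cs: "d e (c s) = s" using geo_d[OF gcc(1), of 0 s] st gcc(2) by auto
  have csM: "c s \<in> M" using geo_M[OF gcc(1) st] .
  obtain \<sigma> where sg: "\<sigma> \<in> {0..d e X}" and ds: "d (c s) (a \<sigma>) \<le> N 3 1 + 1" using bspec[OF sa st] by blast
  obtain \<tau> where tg: "\<tau> \<in> {0..d e Z}" and dt: "d (c s) (b \<tau>) \<le> N 3 1 + 1" using bspec[OF sb st] by blast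
  have n1: "d (c s) (a s) \<le> 2*(N 3 1 + 1) + 0"
    using near_ray[OF ma csM sg ds _ _ e, of s 0] s sl cs by auto
  have n2: "d (c s) (b s) \<le> 2*(N 3 1 + 1) + 0"
    using near_ray[OF mb csM tg dt _ _ e, of s 0] s sl cs by auto
  have aM: "a s \<in> M" "b s \<in> M" using fa(5) fb(5) s sl by auto
  have "d (a s) (b s) \<le> d (a s) (c s) + d (c s) (b s)" using triangle[OF aM(1) csM aM(2)] .
  then show ?thesis using n1 n2 commute[of "a s" "c s"] by linarith
qed

end



context Metric_space begin

lemma sweep:
  assumes e: "e \<in> M" and ma: "morse_geodesic_from M d N e X a" and N0: "N 3 1 \<ge> 0"
    and gh: "geodesic_on M d {u0..u1} h" and up: "up \<in> {u0..u1}"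
    and clo: "\<forall>u\<in>{u0..u1}. d e (h up) \<le> d e (h u)"
    and gc: "geodesic_segment M d 0 (d e (h up)) c e (h up)"
    and m: "m \<in> {0..d e X}" and dm: "d (a m) (h u0) \<le> 1"
    and s1: "d e (h up) \<le> s" and s2: "s \<le> m"
  shows "\<exists>u\<in>{u0..up}. d (a s) (h u) \<le> 3 * (N 3 1 + 1) + 2"
proof -
  define D where "D = N 3 1 + 1"
  have D1: "D \<ge> 1" using N0 unfolding D_def by simp
  note fa = mgf_facts[OF ma]
  define L where "L = d e X"
  have amM: "a m \<in> M" using fa(5) m by auto
  have h0M: "h u0 \<in> M" using geo_M[OF gh] up by auto
  have near: "\<forall>u\<in>{u0..up}. \<exists>\<sigma>\<in>{0..L}. d (h u) (a \<sigma>) \<le> D"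
  proof -
    have "\<forall>u\<in>{u0..up}. \<exists>y\<in>a ` {0..d e X}. d (h u) y \<le> N 3 1 + 1"
      using side[OF e fa(4) fa(5) fa(6) gh up clo gc _ _ N0, of "a m"] m dm by auto
    then show ?thesis unfolding D_def L_def by blast
  qed
  have s0: "s \<in> {0..L}" proof - have "0 \<le> d e (h up)" by simp then have "0 \<le> s" using s1 by linarith then show ?thesis using s2 m unfolding L_def by auto qed
  have asM: "a s \<in> M" using fa(5) s0 unfolding L_def by auto
  have adist: "\<And>x y. x \<in> {0..L} \<Longrightarrow> y \<in> {0..L} \<Longrightarrow> d (a x) (a y) = \<bar>x - y\<bar>"
    using geo_d[OF fa(1)] unfolding L_def by blast
  have aM: "\<And>x. x \<in> {0..L} \<Longrightarrow> a x \<in> M" using fa(5) unfolding L_def by auto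
  define l where "l = up - u0"
  have l0: "l \<ge> 0" using up unfolding l_def by auto
  define n where "n = nat \<lceil>2*l\<rceil> + 1"
  have n1: "real n > 2*l" "n \<ge> 1" unfolding n_def by linarith+
  define v where "v = (\<lambda>i::nat. up - real i * l / real n)"
  have vin: "\<And>i. i \<le> n \<Longrightarrow> v i \<in> {u0..up}"
  proof -
    fix i assume i: "i \<le> n"
    have "real i * l / real n \<le> l" using i n1 l0
      by (simp add: divide_le_eq mult_left_mono mult.commute)
    moreover have "real i * l / real n \<ge> 0" using l0 by simp
    ultimately show "v i \<in> {u0..up}" unfolding v_def l_def by auto
  qed
  have vin': "\<And>i. i \<le> n \<Longrightarrow> v i \<in> {u0..u1}" using vin up by (meson atLeastAtMost_iff order_trans)
  have v0: "v 0 = up" unfolding v_def by simp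
  have vn: "v n = u0" using n1 unfolding v_def l_def by simp
  have vstep: "\<And>i. i < n \<Longrightarrow> d (h (v i)) (h (v (Suc i))) \<le> 1/2"
  proof -
    fix i assume i: "i < n"
    have "d (h (v i)) (h (v (Suc i))) = \<bar>v i - v (Suc i)\<bar>" using geo_d[OF gh vin'[of i] vin'[of "Suc i"]] i by auto
    also have "\<dots> = l / real n" using n1 l0 unfolding v_def by (simp add: algebra_simps add_divide_distrib)
    also have "\<dots> \<le> 1/2" using n1 l0 by (simp add: divide_le_eq)
    finally show "d (h (v i)) (h (v (Suc i))) \<le> 1/2" .
  qed
  define Q where "Q = (\<lambda>i. \<exists>\<sigma>\<in>{0..L}. \<sigma> \<le> s \<and> d (h (v i)) (a \<sigma>) \<le> D)"
  have goal: "\<exists>u\<in>{u0..up}. d (a s) (h u) \<le> 3 * D + 2"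
  proof (cases "Q 0")
    case False
    obtain \<sigma>0 where sg: "\<sigma>0 \<in> {0..L}" and dsg: "d (h up) (a \<sigma>0) \<le> D" using bspec[OF near, of up] up by auto
    have gt: "\<sigma>0 > s" using False sg dsg v0 unfolding Q_def by (metis not_le)
    have pM: "h up \<in> M" using geo_M[OF gh up] .
    have "\<sigma>0 = d e (a \<sigma>0)" using fa(7) sg unfolding L_def by auto
    also have "\<dots> \<le> d e (h up) + d (h up) (a \<sigma>0)" using triangle[OF e pM aM[OF sg]] .
    finally have "\<sigma>0 \<le> s + D" using s1 dsg by linarith
    moreover have "d (a s) (h up) \<le> d (a s) (a \<sigma>0) + d (a \<sigma>0) (h up)" using triangle[OF asM aM[OF sg] pM] .
    moreover have "d (a \<sigma>0) (h up) = d (h up) (a \<sigma>0)" using commute by simp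
    ultimately have "d (a s) (h up) \<le> 2 * D" using adist[OF s0 sg] gt dsg by auto
    then show ?thesis using up D1 by (intro bexI[of _ up]) auto
  next
    case Q0: True
    show ?thesis
    proof (cases "Q n")
      case True
      then obtain \<sigma> where sg: "\<sigma> \<in> {0..L}" "\<sigma> \<le> s" and dsg: "d (h u0) (a \<sigma>) \<le> D"
        unfolding Q_def vn by auto
      have m0: "m \<in> {0..L}" using m unfolding L_def by auto
      have "d (a \<sigma>) (a m) \<le> d (a \<sigma>) (h u0) + d (h u0) (a m)" using triangle[OF aM[OF sg(1)] h0M amM] .
      moreover have "d (a \<sigma>) (h u0) = d (h u0) (a \<sigma>)" "d (h u0) (a m) = d (a m) (h u0)" using commute by auto
      ultimately have "m - \<sigma> \<le> D + 1" using adist[OF sg(1) m0] dsg dm by auto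
      moreover have "d (a s) (h u0) \<le> d (a s) (a m) + d (a m) (h u0)" using triangle[OF asM amM h0M] .
      ultimately have "d (a s) (h u0) \<le> D + 2" using adist[OF s0 m0] dm sg s2 by auto
      then show ?thesis using up D1 by (intro bexI[of _ u0]) auto
    next
      case False
      obtain i where i: "i < n" "Q i" "\<not> Q (Suc i)" using discrete_switch[of Q n] Q0 False by auto
      obtain \<sigma>1 where s1g: "\<sigma>1 \<in> {0..L}" "\<sigma>1 \<le> s" and d1: "d (h (v i)) (a \<sigma>1) \<le> D"
        using i(2) unfolding Q_def by auto
      obtain \<sigma>2 where s2g: "\<sigma>2 \<in> {0..L}" and d2: "d (h (v (Suc i))) (a \<sigma>2) \<le> D"
        using bspec[OF near vin[of "Suc i"]] i(1) by auto
      have gt: "\<sigma>2 > s" using i(3) s2g d2 unfolding Q_def by (metis not_le)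
      have viM: "h (v i) \<in> M" "h (v (Suc i)) \<in> M" using geo_M[OF gh] vin' i(1) by auto
      have "d (a \<sigma>1) (a \<sigma>2) \<le> d (a \<sigma>1) (h (v i)) + d (h (v i)) (a \<sigma>2)"
        using triangle[OF aM[OF s1g(1)] viM(1) aM[OF s2g]] .
      moreover have "d (h (v i)) (a \<sigma>2) \<le> d (h (v i)) (h (v (Suc i))) + d (h (v (Suc i))) (a \<sigma>2)"
        using triangle[OF viM aM[OF s2g]] .
      moreover have "d (a \<sigma>1) (h (v i)) = d (h (v i)) (a \<sigma>1)" using commute by simp
      ultimately have "\<sigma>2 - \<sigma>1 \<le> 2 * D + 1/2" using adist[OF s1g(1) s2g] vstep[OF i(1)] d1 d2 by auto
      moreover have "d (a s) (h (v i)) \<le> d (a s) (a \<sigma>1) + d (a \<sigma>1) (h (v i))"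
        using triangle[OF asM aM[OF s1g(1)] viM(1)] .
      moreover have "d (a \<sigma>1) (h (v i)) = d (h (v i)) (a \<sigma>1)" using commute by simp
      ultimately have "d (a s) (h (v i)) \<le> 3 * D + 2" using adist[OF s0 s1g(1)] s1g gt d1 by auto
      then show ?thesis using vin[of i] i(1) by auto
    qed
  qed
  then show ?thesis unfolding D_def .
qed

end



context Metric_space begin

lemma tri: "x \<in> M \<Longrightarrow> y \<in> M \<Longrightarrow> z \<in> M \<Longrightarrow> d x z \<le> d x y + d y z"
  by (rule triangle)

lemma side_rev:
  assumes e: "e \<in> M"
    and ms: "morse_set M d N S" and SM: "S \<subseteq> M" and eS: "e \<in> S"
    and gh: "geodesic_on M d {u0..u1} h" and up: "up \<in> {u0..u1}"
    and clo: "\<forall>u\<in>{u0..u1}. d e (h up) \<le> d e (h u)"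
    and gc: "geodesic_segment M d 0 (d e (h up)) c e (h up)"
    and w: "w \<in> S" and dw: "d w (h u1) \<le> 1"
    and N0: "N 3 1 \<ge> 0"
  shows "(\<forall>u\<in>{up..u1}. \<exists>y\<in>S. d (h u) y \<le> N 3 1 + 1)"
proof -
  have ghr: "geodesic_on M d {-u1..-u0} (\<lambda>u. h (-u))" using geo_rev[OF gh] .
  have upr: "-up \<in> {-u1..-u0}" using up by auto
  have clor: "\<forall>u\<in>{-u1..-u0}. d e (h (- (-up))) \<le> d e (h (-u))" using clo by auto
  have gcr: "geodesic_segment M d 0 (d e (h (- (-up)))) c e (h (- (-up)))" using gc by simp
  have "\<forall>u\<in>{-u1..-up}. \<exists>y\<in>S. d (h (-u)) y \<le> N 3 1 + 1"
    using side[OF e ms SM eS ghr upr clor gcr w _ N0] dw by auto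
  then show ?thesis
    by (metis atLeastAtMost_iff minus_minus neg_le_iff_le)
qed

lemma MF1:
  assumes e: "e \<in> M" and gm: "geodesic_mspace M d" and N0: "N 3 1 \<ge> 0"
    and ma: "morse_geodesic_from M d N e X a" and mb: "morse_geodesic_from M d N e Y b"
    and ma': "morse_geodesic_from M d N e X' a'" and mb': "morse_geodesic_from M d N e Y' b'"
    and gh: "geodesic_on M d {u0..u1} h" and up: "up \<in> {u0..u1}"
    and clo: "\<forall>u\<in>{u0..u1}. d e (h up) \<le> d e (h u)"
    and P: "d (a Mm) (h u0) \<le> 1" and Q: "d (b Mm) (h u1) \<le> 1"
    and MX: "Mm \<le> d e X" and MY: "Mm \<le> d e Y"
    and gh': "geodesic_on M d {u0'..u1'} h'" and le': "u0' \<le> u1'"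
    and P': "d (a' m) (h' u0') \<le> 1" and Q': "d (b' m) (h' u1') \<le> 1"
    and mX: "m + 1 \<le> d e X'" and mY: "m + 1 \<le> d e Y'"
    and fell: "\<forall>s\<in>{0..m+1}. d (a s) (a' s) \<le> F \<and> d (b s) (b' s) \<le> F"
    and size1: "m + 2 \<le> Mm" and m0: "0 \<le> m" and F0: "0 \<le> F"
    and t: "t \<in> {u0..up}"
    and size2: "d e (h t) + 3 + F + 3 * (N 3 1 + 1) \<le> m"
  shows "\<exists>u'\<in>{u0'..u1'}. d (h t) (h' u') \<le> 7 * (N 3 1 + 1) + 2 * F + 4"
proof -
  define D where "D = N 3 1 + 1"
  have D1: "D \<ge> 1" using N0 unfolding D_def by simp
  note fa = mgf_facts[OF ma] and fb = mgf_facts[OF mb] and fa' = mgf_facts[OF ma'] and fb' = mgf_facts[OF mb']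
  have tt: "t \<in> {u0..u1}" using t up by auto
  have qM: "h t \<in> M" using geo_M[OF gh tt] .
  have u0M: "h u0 \<in> M" and u1M: "h u1 \<in> M" using geo_M[OF gh] up by auto
  have aMm: "a Mm \<in> M" "b Mm \<in> M" using fa(5) fb(5) MX MY size1 m0 by auto
  have adM: "d e (a Mm) = Mm" "d e (b Mm) = Mm" using fa(7) fb(7) MX MY size1 m0 by auto
  obtain c where gc: "geodesic_segment M d 0 (d e (h up)) c e (h up)"
    using gm e geo_M[OF gh up] unfolding geodesic_mspace_def by blast
  have "\<forall>u\<in>{u0..up}. \<exists>y\<in>a ` {0..d e X}. d (h u) y \<le> N 3 1 + 1"
    using side[OF e fa(4) fa(5) fa(6) gh up clo gc _ _ N0, of "a Mm"] P MX size1 m0 by auto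
  then obtain \<sigma>1 where s1: "\<sigma>1 \<in> {0..d e X}" and ds1: "d (h t) (a \<sigma>1) \<le> D"
    using t unfolding D_def by blast
  have as1M: "a \<sigma>1 \<in> M" using fa(5) s1 by auto
  have s1e: "\<bar>\<sigma>1 - d e (h t)\<bar> \<le> D"
  proof -
    have "d e (a \<sigma>1) = \<sigma>1" using fa(7) s1 by auto
    moreover have "d e (a \<sigma>1) \<le> d e (h t) + d (h t) (a \<sigma>1)" using tri[OF e qM as1M] .
    moreover have "d e (h t) \<le> d e (a \<sigma>1) + d (a \<sigma>1) (h t)" using tri[OF e as1M qM] .
    moreover have "d (a \<sigma>1) (h t) = d (h t) (a \<sigma>1)" using commute by simp
    ultimately show ?thesis using ds1 by (auto simp: abs_le_iff)
  qed
  obtain up' where up': "up' \<in> {u0'..u1'}" and clo': "\<forall>u\<in>{u0'..u1'}. d e (h' up') \<le> d e (h' u)"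
    using closest[OF gh' le' e] by blast
  have pM': "h' up' \<in> M" using geo_M[OF gh' up'] .
  obtain c' where gc': "geodesic_segment M d 0 (d e (h' up')) c' e (h' up')"
    using gm e pM' unfolding geodesic_mspace_def by blast
  define \<sigma>' where "\<sigma>' = d e (h' up')"
  have am'M: "a' m \<in> M" "b' m \<in> M" using fa'(5) fb'(5) mX mY m0 by auto
  have u0'M: "h' u0' \<in> M" and u1'M: "h' u1' \<in> M" using geo_M[OF gh'] up' by auto
  have sig0: "0 \<le> \<sigma>'" unfolding \<sigma>'_def by simp
  have sigm: "\<sigma>' \<le> m + 1"
  proof -
    have "\<sigma>' \<le> d e (h' u0')" unfolding \<sigma>'_def using clo' up' by auto
    also have "\<dots> \<le> d e (a' m) + d (a' m) (h' u0')" using tri[OF e am'M(1) u0'M] .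
    also have "d e (a' m) = m" using fa'(7) mX m0 by auto
    finally show ?thesis using P' by linarith
  qed
  have hs1: "\<forall>u\<in>{u0'..up'}. \<exists>y\<in>a' ` {0..d e X'}. d (h' u) y \<le> N 3 1 + 1"
    using side[OF e fa'(4) fa'(5) fa'(6) gh' up' clo' gc' _ _ N0, of "a' m"] P' mX m0 by auto
  have "up' \<in> {u0'..up'}" using up' by auto
  from bspec[OF hs1 this] obtain \<tau>1 where t1: "\<tau>1 \<in> {0..d e X'}" and dt1: "d (h' up') (a' \<tau>1) \<le> D"
    unfolding D_def by auto
  have hs2: "\<forall>u\<in>{up'..u1'}. \<exists>y\<in>b' ` {0..d e Y'}. d (h' u) y \<le> N 3 1 + 1"
  proof -
    have "b' m \<in> b' ` {0..d e Y'}" using mY m0 by auto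
    then show ?thesis using side_rev[OF e fb'(4) fb'(5) fb'(6) gh' up' clo' gc' _ Q' N0] by blast
  qed
  have "up' \<in> {up'..u1'}" using up' by auto
  from bspec[OF hs2 this] obtain \<tau>2 where t2: "\<tau>2 \<in> {0..d e Y'}" and dt2: "d (h' up') (b' \<tau>2) \<le> D"
    unfolding D_def by auto
  have sigX': "\<sigma>' \<in> {0..d e X'}" "\<sigma>' \<in> {0..d e Y'}" using sig0 sigm mX mY by auto
  have n1: "d (h' up') (a' \<sigma>') \<le> 2*D + 0"
    using near_ray[OF ma' pM' t1 dt1 sigX'(1) _ e, of 0] unfolding \<sigma>'_def by simp
  have n2: "d (h' up') (b' \<sigma>') \<le> 2*D + 0"
    using near_ray[OF mb' pM' t2 dt2 sigX'(2) _ e, of 0] unfolding \<sigma>'_def by simp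
  have sigin: "\<sigma>' \<in> {0..m+1}" using sig0 sigm by auto
  have sigX: "\<sigma>' \<in> {0..d e X}" "\<sigma>' \<in> {0..d e Y}" using sig0 sigm size1 MX MY by auto
  have asM: "a \<sigma>' \<in> M" "b \<sigma>' \<in> M" "a' \<sigma>' \<in> M" "b' \<sigma>' \<in> M"
    using fa(5) fb(5) fa'(5) fb'(5) sigX sigX' by auto
  have dab: "d (a \<sigma>') (b \<sigma>') \<le> 2*F + 4*D"
  proof -
    have "d (a \<sigma>') (b \<sigma>') \<le> d (a \<sigma>') (a' \<sigma>') + d (a' \<sigma>') (b \<sigma>')" using tri[OF asM(1) asM(3) asM(2)] .
    moreover have "d (a' \<sigma>') (b \<sigma>') \<le> d (a' \<sigma>') (h' up') + d (h' up') (b \<sigma>')" using tri[OF asM(3) pM' asM(2)] .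
    moreover have "d (h' up') (b \<sigma>') \<le> d (h' up') (b' \<sigma>') + d (b' \<sigma>') (b \<sigma>')" using tri[OF pM' asM(4) asM(2)] .
    moreover have "d (a' \<sigma>') (h' up') = d (h' up') (a' \<sigma>')" "d (b' \<sigma>') (b \<sigma>') = d (b \<sigma>') (b' \<sigma>')" using commute by auto
    ultimately show ?thesis using fell sigin n1 n2 by fastforce
  qed
  have gdist: "d (h u0) (h u1) = d (h u0) (h t) + d (h t) (h u1)"
    using geo_d[OF gh, of u0 u1] geo_d[OF gh, of u0 t] geo_d[OF gh, of t u1] up tt by auto
  have PQ: "d (h u0) (h u1) \<le> 2 + 2 * (Mm - \<sigma>') + 2*F + 4*D"
  proof -
    have "d (h u0) (h u1) \<le> d (h u0) (a Mm) + d (a Mm) (h u1)" using tri[OF u0M aMm(1) u1M] .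
    moreover have "d (a Mm) (h u1) \<le> d (a Mm) (a \<sigma>') + d (a \<sigma>') (h u1)" using tri[OF aMm(1) asM(1) u1M] .
    moreover have "d (a \<sigma>') (h u1) \<le> d (a \<sigma>') (b \<sigma>') + d (b \<sigma>') (h u1)" using tri[OF asM(1) asM(2) u1M] .
    moreover have "d (b \<sigma>') (h u1) \<le> d (b \<sigma>') (b Mm) + d (b Mm) (h u1)" using tri[OF asM(2) aMm(2) u1M] .
    moreover have "d (a Mm) (a \<sigma>') = Mm - \<sigma>'" using geo_d[OF fa(1), of Mm \<sigma>'] sigX MX size1 sigm by auto
    moreover have "d (b \<sigma>') (b Mm) = Mm - \<sigma>'" using geo_d[OF fb(1), of \<sigma>' Mm] sigX MY size1 sigm by auto
    moreover have "d (h u0) (a Mm) = d (a Mm) (h u0)" using commute by simp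
    ultimately show ?thesis using P Q dab by argo
  qed
  have eP: "Mm - 1 \<le> d e (h u0)"
    using tri[OF e u0M aMm(1)] adM P commute[of "h u0" "a Mm"] by linarith
  have eQ: "Mm - 1 \<le> d e (h u1)"
    using tri[OF e u1M aMm(2)] adM Q commute[of "h u1" "b Mm"] by linarith
  have eq: "\<sigma>' - 2 - F - 2*D \<le> d e (h t)"
  proof -
    have "d e (h u0) \<le> d e (h t) + d (h t) (h u0)" using tri[OF e qM u0M] .
    moreover have "d e (h u1) \<le> d e (h t) + d (h t) (h u1)" using tri[OF e qM u1M] .
    moreover have "d (h t) (h u0) = d (h u0) (h t)" using commute by simp
    ultimately show ?thesis using gdist PQ eP eQ by argo
  qed
  define s where "s = max \<sigma>1 \<sigma>'"
  have sm: "s \<le> m" unfolding s_def using s1e eq size2 F0 N0 unfolding D_def by (auto simp: abs_le_iff)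
  have mX0: "m \<in> {0..d e X'}" using m0 mX by auto
  obtain u' where u': "u' \<in> {u0'..up'}" and du': "d (a' s) (h' u') \<le> 3 * D + 2"
    using sweep[OF e ma' N0 gh' up' clo' gc' mX0 P', of s] sm unfolding s_def \<sigma>'_def D_def by auto
  have s1in: "\<sigma>1 \<in> {0..m+1}" using s1 sm unfolding s_def by auto
  have s1X': "\<sigma>1 \<in> {0..d e X'}" "s \<in> {0..d e X'}" using s1in mX sm s1 unfolding s_def by auto
  have asM': "a' \<sigma>1 \<in> M" "a' s \<in> M" using fa'(5) s1X' by auto
  have hu'M: "h' u' \<in> M" using geo_M[OF gh'] u' up' by auto
  have "d (h t) (h' u') \<le> d (h t) (a \<sigma>1) + d (a \<sigma>1) (h' u')" using tri[OF qM as1M hu'M] .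
  moreover have "d (a \<sigma>1) (h' u') \<le> d (a \<sigma>1) (a' \<sigma>1) + d (a' \<sigma>1) (h' u')" using tri[OF as1M asM'(1) hu'M] .
  moreover have "d (a' \<sigma>1) (h' u') \<le> d (a' \<sigma>1) (a' s) + d (a' s) (h' u')" using tri[OF asM' hu'M] .
  moreover have "d (a' \<sigma>1) (a' s) = s - \<sigma>1" using geo_d[OF fa'(1) s1X'] unfolding s_def by auto
  moreover have "s - \<sigma>1 \<le> 2 + F + 3 * D" unfolding s_def using s1e eq F0 D1 by (auto simp: abs_le_iff max_def)
  moreover have "d (a \<sigma>1) (a' \<sigma>1) \<le> F" using fell s1in by auto
  ultimately have "d (h t) (h' u') \<le> 7 * D + 2 * F + 4" using ds1 du' by linarith
  then show ?thesis using u' up' unfolding D_def by (intro bexI[of _ u']) auto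
qed

end



context Metric_space begin

lemma MF:
  assumes e: "e \<in> M" and gm: "geodesic_mspace M d" and N0: "N 3 1 \<ge> 0"
    and ma: "morse_geodesic_from M d N e X a" and mb: "morse_geodesic_from M d N e Y b"
    and ma': "morse_geodesic_from M d N e X' a'" and mb': "morse_geodesic_from M d N e Y' b'"
    and gh: "geodesic_on M d {u0..u1} h"
    and P: "d (a Mm) (h u0) \<le> 1" and Q: "d (b Mm) (h u1) \<le> 1"
    and MX: "Mm \<le> d e X" and MY: "Mm \<le> d e Y"
    and gh': "geodesic_on M d {u0'..u1'} h'" and le': "u0' \<le> u1'"
    and P': "d (a' m) (h' u0') \<le> 1" and Q': "d (b' m) (h' u1') \<le> 1"
    and mX: "m + 1 \<le> d e X'" and mY: "m + 1 \<le> d e Y'"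
    and fell: "\<forall>s\<in>{0..m+1}. d (a s) (a' s) \<le> F \<and> d (b s) (b' s) \<le> F"
    and size1: "m + 2 \<le> Mm" and m0: "0 \<le> m" and F0: "0 \<le> F"
    and t: "t \<in> {u0..u1}"
    and size2: "d e (h t) + 3 + F + 3 * (N 3 1 + 1) \<le> m"
  shows "\<exists>u'\<in>{u0'..u1'}. d (h t) (h' u') \<le> 7 * (N 3 1 + 1) + 2 * F + 4"
proof -
  obtain up where up: "up \<in> {u0..u1}" and clo: "\<forall>u\<in>{u0..u1}. d e (h up) \<le> d e (h u)"
    using closest[OF gh _ e] t by auto
  show ?thesis
  proof (cases "t \<le> up")
    case True
    then have tt: "t \<in> {u0..up}" using t by auto
    show ?thesis using MF1[OF e gm N0 ma mb ma' mb' gh up clo P Q MX MY gh' le' P' Q' mX mY fell size1 m0 F0 tt size2] .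
  next
    case False
    have ghr: "geodesic_on M d {-u1..-u0} (\<lambda>u. h (-u))" using geo_rev[OF gh] .
    have upr: "-up \<in> {-u1..-u0}" using up by auto
    have clor: "\<forall>u\<in>{-u1..-u0}. d e (h (- (-up))) \<le> d e (h (-u))" using clo by auto
    have Pr: "d (b Mm) (h (- (-u1))) \<le> 1" and Qr: "d (a Mm) (h (- (-u0))) \<le> 1" using P Q by auto
    have ghr': "geodesic_on M d {-u1'..-u0'} (\<lambda>u. h' (-u))" using geo_rev[OF gh'] .
    have ler: "-u1' \<le> -u0'" using le' by auto
    have Pr': "d (b' m) (h' (- (-u1'))) \<le> 1" and Qr': "d (a' m) (h' (- (-u0'))) \<le> 1" using P' Q' by auto
    have fellr: "\<forall>s\<in>{0..m+1}. d (b s) (b' s) \<le> F \<and> d (a s) (a' s) \<le> F" using fell by auto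
    have tr: "-t \<in> {-u1..- up}" using t False by auto
    have s2: "d e (h (- (-t))) + 3 + F + 3 * (N 3 1 + 1) \<le> m" using size2 by simp
    obtain u' where u': "u' \<in> {-u1'..-u0'}" and du: "d (h (- (-t))) (h' (-u')) \<le> 7 * (N 3 1 + 1) + 2 * F + 4"
      using MF1[OF e gm N0 mb ma mb' ma' ghr upr clor Pr Qr MY MX ghr' ler Pr' Qr' mY mX fellr size1 m0 F0 tr s2]
      by blast
    show ?thesis using u' du by (intro bexI[of _ "-u'"]) auto
  qed
qed

end



context Metric_space begin

lemma gp_comm: "gromov_product d e x y = gromov_product d e y x"
  unfolding gromov_product_def using commute by simp

lemma gp_le: "e \<in> M \<Longrightarrow> X \<in> M \<Longrightarrow> Z \<in> M \<Longrightarrow> gromov_product d e X Z \<le> d e X"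
  unfolding gromov_product_def using triangle[of e X Z] commute[of X Z] by simp

lemma mgf_end: "morse_geodesic_from M d N e X a \<Longrightarrow> X \<in> M"
  using mgf_facts(3,5)[of N e X a] by (metis atLeastAtMost_iff image_subset_iff order_refl nonneg)

lemma FL:
  assumes e: "e \<in> M" and gm: "geodesic_mspace M d" and N0: "N 3 1 \<ge> 0"
    and zs: "\<forall>i. \<exists>\<gamma>. morse_geodesic_from M d N e (z i) \<gamma>"
    and zx: "equiv_at_infinity d e z x" and zx': "equiv_at_infinity d e z x'"
    and ax: "\<forall>n. morse_geodesic_from M d N e (x n) (\<alpha> n)"
    and ax': "\<forall>n. morse_geodesic_from M d N e (x' n) (\<alpha>' n)"
  shows "\<exists>n0. \<forall>j\<ge>n0. \<forall>j'\<ge>n0. \<forall>s\<in>{0..R}. d (\<alpha> j s) (\<alpha>' j' s) \<le> 8 * (N 3 1 + 1)"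
proof -
  obtain n1 where n1: "\<forall>i\<ge>n1. \<forall>j\<ge>n1. gromov_product d e (z i) (x j) \<ge> R"
    using zx unfolding equiv_at_infinity_def by blast
  obtain n2 where n2: "\<forall>i\<ge>n2. \<forall>j\<ge>n2. gromov_product d e (z i) (x' j) \<ge> R"
    using zx' unfolding equiv_at_infinity_def by blast
  define i where "i = max n1 n2"
  obtain \<gamma> where g: "morse_geodesic_from M d N e (z i) \<gamma>" using zs by blast
  show ?thesis
  proof (intro exI[of _ i] allI impI ballI)
    fix j j' s assume j: "i \<le> j" and j': "i \<le> j'" and s: "s \<in> {0..R}"
    have g1: "gromov_product d e (x j) (z i) \<ge> R" using n1 j gp_comm unfolding i_def by auto
    have g2: "gromov_product d e (x' j') (z i) \<ge> R" using n2 j' gp_comm unfolding i_def by auto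
    have d1: "d (\<alpha> j s) (\<gamma> s) \<le> 4 * (N 3 1 + 1)"
      using fellow[OF e gm N0 ax[rule_format, of j] g] s g1 by auto
    have d2: "d (\<alpha>' j' s) (\<gamma> s) \<le> 4 * (N 3 1 + 1)"
      using fellow[OF e gm N0 ax'[rule_format, of j'] g] s g2 by auto
    note f1 = mgf_facts[OF ax[rule_format, of j]] and f2 = mgf_facts[OF ax'[rule_format, of j']]
      and f3 = mgf_facts[OF g]
    have XM: "x j \<in> M" "x' j' \<in> M" "z i \<in> M"
      using mgf_end ax ax' g by blast+
    have l1: "s \<le> d e (x j)" "s \<le> d e (x' j')"
      using gp_le[OF e XM(1) XM(3)] gp_le[OF e XM(2) XM(3)] s g1 g2 by auto
    have l3: "s \<le> d e (z i)"
      using gp_le[OF e XM(3) XM(1)] gp_comm s g1 by (metis atLeastAtMost_iff order_trans)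
    have pM: "\<alpha> j s \<in> M" "\<alpha>' j' s \<in> M" "\<gamma> s \<in> M" using f1(5) f2(5) f3(5) l1 l3 s by auto
    have "d (\<alpha> j s) (\<alpha>' j' s) \<le> d (\<alpha> j s) (\<gamma> s) + d (\<gamma> s) (\<alpha>' j' s)" using triangle[OF pM(1) pM(3) pM(2)] .
    then show "d (\<alpha> j s) (\<alpha>' j' s) \<le> 8 * (N 3 1 + 1)" using d1 d2 commute[of "\<gamma> s" "\<alpha>' j' s"] by linarith
  qed
qed

end



context Metric_space begin

lemma half:
  assumes e: "e \<in> M" and gm: "geodesic_mspace M d" and N0: "N 3 1 \<ge> 0"
    and zs: "\<forall>i. \<exists>\<gamma>. morse_geodesic_from M d N e (z i) \<gamma>"
    and zx: "equiv_at_infinity d e z x" and zx': "equiv_at_infinity d e z x'"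
    and ws: "\<forall>i. \<exists>\<gamma>. morse_geodesic_from M d N e (w i) \<gamma>"
    and wy: "equiv_at_infinity d e w y" and wy': "equiv_at_infinity d e w y'"
    and ax: "\<forall>n. morse_geodesic_from M d N e (x n) (\<alpha> n)"
    and yb: "\<forall>n. morse_geodesic_from M d N e (y n) (\<beta> n)"
    and phi: "strict_mono \<phi>"
    and cx: "segs_converge_to_ray d (\<lambda>n. d e (x (\<phi> n))) (\<lambda>n. \<alpha> (\<phi> n)) rx"
    and cy: "segs_converge_to_ray d (\<lambda>n. d e (y (\<phi> n))) (\<lambda>n. \<beta> (\<phi> n)) ry"
    and gs: "\<forall>n. geodesic_segment M d (A n) (B n) (g n) (rx (real n)) (ry (real n))"
    and psi: "strict_mono \<psi>"
    and bi: "biinfinite_geodesic M d g0"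
    and cl: "segs_converge_to_line d (\<lambda>n. A (\<psi> n)) (\<lambda>n. B (\<psi> n)) (\<lambda>n. g (\<psi> n)) g0"
    and ax': "\<forall>n. morse_geodesic_from M d N e (x' n) (\<alpha>' n)"
    and yb': "\<forall>n. morse_geodesic_from M d N e (y' n) (\<beta>' n)"
    and phi': "strict_mono \<phi>'"
    and cx': "segs_converge_to_ray d (\<lambda>n. d e (x' (\<phi>' n))) (\<lambda>n. \<alpha>' (\<phi>' n)) rx'"
    and cy': "segs_converge_to_ray d (\<lambda>n. d e (y' (\<phi>' n))) (\<lambda>n. \<beta>' (\<phi>' n)) ry'"
    and gs': "\<forall>n. geodesic_segment M d (A' n) (B' n) (g' n) (rx' (real n)) (ry' (real n))"
    and psi': "strict_mono \<psi>'"
    and bi': "biinfinite_geodesic M d g0'"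
    and cl': "segs_converge_to_line d (\<lambda>n. A' (\<psi>' n)) (\<lambda>n. B' (\<psi>' n)) (\<lambda>n. g' (\<psi>' n)) g0'"
  shows "\<exists>t'. d (g0 t0) (g0' t') \<le> 7 * (N 3 1 + 1) + 2 * (8 * (N 3 1 + 1)) + 4 + 2"
proof -
  define D where "D = N 3 1 + 1"
  define F where "F = 8 * D"
  define K0 where "K0 = 7 * D + 2 * F + 4"
  have D1: "D \<ge> 1" using N0 unfolding D_def by simp
  have F0: "F \<ge> 0" using D1 unfolding F_def by simp
  have K00: "K0 \<ge> 0" using D1 F0 unfolding K0_def by simp
  have g0M: "\<And>t. g0 t \<in> M" "\<And>t. g0' t \<in> M"
    using bi bi' unfolding biinfinite_geodesic_def geodesic_on_def by auto
  have g0d: "\<And>s t. d (g0' s) (g0' t) = \<bar>s - t\<bar>"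
    using bi' unfolding biinfinite_geodesic_def geodesic_on_def by auto
  define p where "p = g0 t0"
  have pM: "p \<in> M" unfolding p_def using g0M by simp
  define o' where "o' = g0' 0"
  have oM: "o' \<in> M" unfolding o'_def using g0M by simp
  define T' where "T' = K0 + 2 + d p o'"
  have T'0: "T' \<ge> 0" using K00 unfolding T'_def by simp
  obtain n2 where n2: "\<forall>n\<ge>n2. A' (\<psi>' n) \<le> -T' \<and> T' \<le> B' (\<psi>' n) \<and>
      (\<forall>t\<in>{-T'..T'}. d (g' (\<psi>' n) t) (g0' t) < 1)"
    using cl' T'0 unfolding segs_converge_to_line_def by (meson zero_less_one)
  define R0 where "R0 = d e p + 1 + 3 + F + 3 * D"
  define n' where "n' = max n2 (nat \<lceil>R0\<rceil>)"
  define m where "m = real (\<psi>' n')"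
  have mR: "m \<ge> R0"
  proof -
    have "n' \<le> \<psi>' n'" using psi' by (simp add: strict_mono_imp_increasing)
    moreover have "R0 \<le> real n'" unfolding n'_def by linarith
    ultimately show ?thesis unfolding m_def by linarith
  qed
  have m0: "0 \<le> m" unfolding m_def by simp
  define h' where "h' = g' (\<psi>' n')"
  define u0' where "u0' = A' (\<psi>' n')"
  define u1' where "u1' = B' (\<psi>' n')"
  have hn2: "u0' \<le> -T'" "T' \<le> u1'" "\<forall>t\<in>{-T'..T'}. d (h' t) (g0' t) < 1"
    using n2 unfolding n'_def h'_def u0'_def u1'_def by auto
  have gs2: "geodesic_segment M d u0' u1' h' (rx' m) (ry' m)"
    using gs' unfolding h'_def u0'_def u1'_def m_def by auto
  have gh': "geodesic_on M d {u0'..u1'} h'" "h' u0' = rx' m" "h' u1' = ry' m" "u0' \<le> u1'"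
    using gs2 unfolding geodesic_segment_def by auto
  define aT where "aT = \<bar>t0\<bar>"
  obtain n4 where n4: "\<forall>n\<ge>n4. A (\<psi> n) \<le> -aT \<and> aT \<le> B (\<psi> n) \<and>
      (\<forall>t\<in>{-aT..aT}. d (g (\<psi> n) t) (g0 t) < 1)"
    using cl unfolding segs_converge_to_line_def aT_def by (meson abs_ge_zero zero_less_one)
  define n where "n = max n4 (nat \<lceil>m + 2\<rceil>)"
  define Mm where "Mm = real (\<psi> n)"
  have Mm: "m + 2 \<le> Mm"
  proof -
    have "n \<le> \<psi> n" using psi by (simp add: strict_mono_imp_increasing)
    moreover have "m + 2 \<le> real n" unfolding n_def by linarith
    ultimately show ?thesis unfolding Mm_def by linarith
  qed
  define h where "h = g (\<psi> n)"
  define u0 where "u0 = A (\<psi> n)"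
  define u1 where "u1 = B (\<psi> n)"
  have hn4: "u0 \<le> -aT" "aT \<le> u1" "\<forall>t\<in>{-aT..aT}. d (h t) (g0 t) < 1"
    using n4 unfolding n_def h_def u0_def u1_def by auto
  have gs1: "geodesic_segment M d u0 u1 h (rx Mm) (ry Mm)"
    using gs unfolding h_def u0_def u1_def Mm_def by auto
  have gh: "geodesic_on M d {u0..u1} h" "h u0 = rx Mm" "h u1 = ry Mm"
    using gs1 unfolding geodesic_segment_def by auto
  have t0in: "t0 \<in> {u0..u1}" using hn4 unfolding aT_def by auto
  have t0a: "t0 \<in> {-aT..aT}" unfolding aT_def by auto
  have dqp: "d (h t0) p < 1" using bspec[OF hn4(3) t0a] unfolding p_def .
  have qM: "h t0 \<in> M" using geo_M[OF gh(1) t0in] .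
  obtain n5 where n5: "\<forall>j\<ge>n5. \<forall>j'\<ge>n5. \<forall>s\<in>{0..m+1}. d (\<alpha> j s) (\<alpha>' j' s) \<le> 8 * (N 3 1 + 1)"
    using FL[OF e gm N0 zs zx zx' ax ax'] by blast
  obtain n6 where n6: "\<forall>j\<ge>n6. \<forall>j'\<ge>n6. \<forall>s\<in>{0..m+1}. d (\<beta> j s) (\<beta>' j' s) \<le> 8 * (N 3 1 + 1)"
    using FL[OF e gm N0 ws wy wy' yb yb'] by blast
  have Mm0: "Mm \<ge> 0" using Mm m0 by simp
  obtain n7 where n7: "\<forall>k\<ge>n7. Mm \<le> d e (x (\<phi> k)) \<and> (\<forall>t\<in>{0..Mm}. d (\<alpha> (\<phi> k) t) (rx t) < 1)"
    using cx Mm0 unfolding segs_converge_to_ray_def by (meson zero_less_one)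
  obtain n8 where n8: "\<forall>k\<ge>n8. Mm \<le> d e (y (\<phi> k)) \<and> (\<forall>t\<in>{0..Mm}. d (\<beta> (\<phi> k) t) (ry t) < 1)"
    using cy Mm0 unfolding segs_converge_to_ray_def by (meson zero_less_one)
  have m10: "m + 1 \<ge> 0" using m0 by simp
  obtain n9 where n9: "\<forall>k\<ge>n9. m + 1 \<le> d e (x' (\<phi>' k)) \<and> (\<forall>t\<in>{0..m+1}. d (\<alpha>' (\<phi>' k) t) (rx' t) < 1)"
    using cx' m10 unfolding segs_converge_to_ray_def by (meson zero_less_one)
  obtain n10 where n10: "\<forall>k\<ge>n10. m + 1 \<le> d e (y' (\<phi>' k)) \<and> (\<forall>t\<in>{0..m+1}. d (\<beta>' (\<phi>' k) t) (ry' t) < 1)"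
    using cy' m10 unfolding segs_converge_to_ray_def by (meson zero_less_one)
  define k where "k = max (max n5 n6) (max n7 n8)"
  define k' where "k' = max (max n5 n6) (max n9 n10)"
  have kk: "k \<le> \<phi> k" "k' \<le> \<phi>' k'" using phi phi' by (simp_all add: strict_mono_imp_increasing)
  have fell: "\<forall>s\<in>{0..m+1}. d (\<alpha> (\<phi> k) s) (\<alpha>' (\<phi>' k') s) \<le> F \<and> d (\<beta> (\<phi> k) s) (\<beta>' (\<phi>' k') s) \<le> F"
    using n5 n6 kk unfolding k_def k'_def F_def D_def by auto
  have c7: "Mm \<le> d e (x (\<phi> k))" "d (\<alpha> (\<phi> k) Mm) (rx Mm) < 1" using n7 Mm0 unfolding k_def by auto
  have c8: "Mm \<le> d e (y (\<phi> k))" "d (\<beta> (\<phi> k) Mm) (ry Mm) < 1" using n8 Mm0 unfolding k_def by auto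
  have c9: "m + 1 \<le> d e (x' (\<phi>' k'))" "d (\<alpha>' (\<phi>' k') m) (rx' m) < 1" using n9 m0 unfolding k'_def by auto
  have c10: "m + 1 \<le> d e (y' (\<phi>' k'))" "d (\<beta>' (\<phi>' k') m) (ry' m) < 1" using n10 m0 unfolding k'_def by auto
  have P: "d (\<alpha> (\<phi> k) Mm) (h u0) \<le> 1" using c7 gh by simp
  have Q: "d (\<beta> (\<phi> k) Mm) (h u1) \<le> 1" using c8 gh by simp
  have P': "d (\<alpha>' (\<phi>' k') m) (h' u0') \<le> 1" using c9 gh' by simp
  have Q': "d (\<beta>' (\<phi>' k') m) (h' u1') \<le> 1" using c10 gh' by simp
  have dep: "d e (h t0) \<le> d e p + 1" using triangle[OF e pM qM] dqp commute[of p "h t0"] by linarith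
  have size2: "d e (h t0) + 3 + F + 3 * (N 3 1 + 1) \<le> m" using dep mR unfolding R0_def D_def by linarith
  obtain u' where u': "u' \<in> {u0'..u1'}" and du': "d (h t0) (h' u') \<le> 7 * (N 3 1 + 1) + 2 * F + 4"
    using MF[OF e gm N0 ax[rule_format, of "\<phi> k"] yb[rule_format, of "\<phi> k"]
        ax'[rule_format, of "\<phi>' k'"] yb'[rule_format, of "\<phi>' k'"] gh(1) P Q c7(1) c8(1)
        gh'(1) gh'(4) P' Q' c9(1) c10(1) fell Mm m0 F0 t0in size2] by blast
  have du'K: "d (h t0) (h' u') \<le> K0" using du' unfolding K0_def D_def .
  have zin: "0 \<in> {u0'..u1'}" using hn2 T'0 by auto
  have hu'M: "h' u' \<in> M" and h0M: "h' 0 \<in> M" using geo_M[OF gh'(1)] u' zin by auto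
  have "\<bar>u' - 0\<bar> = d (h' u') (h' 0)" using geo_d[OF gh'(1) u' zin] by simp
  also have "\<dots> \<le> d (h' u') (h t0) + d (h t0) (h' 0)" using triangle[OF hu'M qM h0M] .
  also have "d (h t0) (h' 0) \<le> d (h t0) p + d p (h' 0)" using triangle[OF qM pM h0M] .
  also have "d p (h' 0) \<le> d p o' + d o' (h' 0)" using triangle[OF pM oM h0M] .
  finally have "\<bar>u'\<bar> \<le> d (h' u') (h t0) + (d (h t0) p + (d p o' + d o' (h' 0)))" by simp
  moreover have "d o' (h' 0) < 1" using hn2(3) T'0 commute[of o' "h' 0"] unfolding o'_def by auto
  moreover have "d (h' u') (h t0) = d (h t0) (h' u')" using commute by simp
  ultimately have "\<bar>u'\<bar> \<le> T'" using du'K dqp unfolding T'_def by linarith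
  then have "u' \<in> {-T'..T'}" by auto
  then have "d (h' u') (g0' u') < 1" using hn2(3) by blast
  moreover have "d p (g0' u') \<le> d p (h t0) + d (h t0) (g0' u')" using triangle[OF pM qM g0M(2)] .
  moreover have "d (h t0) (g0' u') \<le> d (h t0) (h' u') + d (h' u') (g0' u')" using triangle[OF qM hu'M g0M(2)] .
  moreover have "d p (h t0) = d (h t0) p" using commute by simp
  ultimately have "d p (g0' u') \<le> K0 + 2" using du'K dqp by linarith
  then show ?thesis unfolding p_def K0_def F_def D_def by blast
qed

end



theorem proposition3p7:
  fixes N :: "real \<Rightarrow> real \<Rightarrow> real"
  assumes "morse_gauge N"
  shows "\<exists>K'>0. \<forall>(M :: 'a set) d e Lm Lp g g'.
           Metric_space M d \<and> proper_mspace M d \<and> geodesic_mspace M d \<and> e \<in> M \<and>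
           Lm \<in> morse_boundary M d N e \<and> Lp \<in> morse_boundary M d N e \<and> Lm \<noteq> Lp \<and>
           limit_geodesic M d N e Lm Lp g \<and> limit_geodesic M d N e Lm Lp g'
           \<longrightarrow> mhausdist d (range g) (range g') < ereal K'"
proof -
  have N0: "N 3 1 \<ge> 0" using assms unfolding morse_gauge_def by auto
  define K0 where "K0 = 7 * (N 3 1 + 1) + 2 * (8 * (N 3 1 + 1)) + 4 + 2"
  have K0p: "K0 \<ge> 0" using N0 unfolding K0_def by simp
  show ?thesis
  proof (intro exI[of _ "K0 + 1"] conjI allI impI)
    show "K0 + 1 > 0" using K0p by simp
    fix M :: "'a set" and d e Lm Lp g0 g0'
    assume H: "Metric_space M d \<and> proper_mspace M d \<and> geodesic_mspace M d \<and> e \<in> M \<and>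
           Lm \<in> morse_boundary M d N e \<and> Lp \<in> morse_boundary M d N e \<and> Lm \<noteq> Lp \<and>
           limit_geodesic M d N e Lm Lp g0 \<and> limit_geodesic M d N e Lm Lp g0'"
    have ms: "Metric_space M d" and gm: "geodesic_mspace M d" and e: "e \<in> M"
      and Lm: "Lm \<in> morse_boundary M d N e" and Lp: "Lp \<in> morse_boundary M d N e"
      and l1: "limit_geodesic M d N e Lm Lp g0" and l2: "limit_geodesic M d N e Lm Lp g0'"
      using H by auto
    obtain z where zS: "z \<in> stratum_seqs_at_infinity M d N e"
      and Lmz: "Lm = {y \<in> stratum_seqs_at_infinity M d N e. equiv_at_infinity d e z y}"
      using Lm unfolding morse_boundary_def by blast
    obtain w where wS: "w \<in> stratum_seqs_at_infinity M d N e"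
      and Lpw: "Lp = {y \<in> stratum_seqs_at_infinity M d N e. equiv_at_infinity d e w y}"
      using Lp unfolding morse_boundary_def by blast
    have zs: "\<forall>i. \<exists>\<gamma>. morse_geodesic_from M d N e (z i) \<gamma>"
      using zS unfolding stratum_seqs_at_infinity_def morse_stratum_def by auto
    have ws: "\<forall>i. \<exists>\<gamma>. morse_geodesic_from M d N e (w i) \<gamma>"
      using wS unfolding stratum_seqs_at_infinity_def morse_stratum_def by auto
    obtain x y \<alpha> \<beta> \<phi> rx ry A B g \<psi> where
        c1: "x \<in> Lm" "y \<in> Lp"
        "\<forall>n. morse_geodesic_from M d N e (x n) (\<alpha> n)"
        "\<forall>n. morse_geodesic_from M d N e (y n) (\<beta> n)"
        "strict_mono \<phi>"
        "geodesic_ray M d rx e" "geodesic_ray M d ry e"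
        "segs_converge_to_ray d (\<lambda>n. d e (x (\<phi> n))) (\<lambda>n. \<alpha> (\<phi> n)) rx"
        "segs_converge_to_ray d (\<lambda>n. d e (y (\<phi> n))) (\<lambda>n. \<beta> (\<phi> n)) ry"
        "\<forall>n. geodesic_segment M d (A n) (B n) (g n) (rx (real n)) (ry (real n))"
        "strict_mono \<psi>"
        "biinfinite_geodesic M d g0"
        "segs_converge_to_line d (\<lambda>n. A (\<psi> n)) (\<lambda>n. B (\<psi> n)) (\<lambda>n. g (\<psi> n)) g0"
      using l1 unfolding limit_geodesic_def by blast
    obtain x' y' \<alpha>' \<beta>' \<phi>' rx' ry' A' B' g' \<psi>' where
        c2: "x' \<in> Lm" "y' \<in> Lp"
        "\<forall>n. morse_geodesic_from M d N e (x' n) (\<alpha>' n)"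
        "\<forall>n. morse_geodesic_from M d N e (y' n) (\<beta>' n)"
        "strict_mono \<phi>'"
        "geodesic_ray M d rx' e" "geodesic_ray M d ry' e"
        "segs_converge_to_ray d (\<lambda>n. d e (x' (\<phi>' n))) (\<lambda>n. \<alpha>' (\<phi>' n)) rx'"
        "segs_converge_to_ray d (\<lambda>n. d e (y' (\<phi>' n))) (\<lambda>n. \<beta>' (\<phi>' n)) ry'"
        "\<forall>n. geodesic_segment M d (A' n) (B' n) (g' n) (rx' (real n)) (ry' (real n))"
        "strict_mono \<psi>'"
        "biinfinite_geodesic M d g0'"
        "segs_converge_to_line d (\<lambda>n. A' (\<psi>' n)) (\<lambda>n. B' (\<psi>' n)) (\<lambda>n. g' (\<psi>' n)) g0'"
      using l2 unfolding limit_geodesic_def by blast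
    have zx: "equiv_at_infinity d e z x" "equiv_at_infinity d e z x'" using c1(1) c2(1) Lmz by auto
    have wy: "equiv_at_infinity d e w y" "equiv_at_infinity d e w y'" using c1(2) c2(2) Lpw by auto
    have h1: "\<And>t0. \<exists>t'. d (g0 t0) (g0' t') \<le> K0"
      using Metric_space.half[OF ms e gm N0 zs zx(1) zx(2) ws wy(1) wy(2) c1(3,4,5,8,9,10,11,12,13)
          c2(3,4,5,8,9,10,11,12,13)] unfolding K0_def by blast
    have h2: "\<And>t0. \<exists>t'. d (g0' t0) (g0 t') \<le> K0"
      using Metric_space.half[OF ms e gm N0 zs zx(2) zx(1) ws wy(2) wy(1) c2(3,4,5,8,9,10,11,12,13)
          c1(3,4,5,8,9,10,11,12,13)] unfolding K0_def by blast
    have s1: "(SUP s\<in>range g0. INF t\<in>range g0'. ereal (d s t)) \<le> ereal K0"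
    proof (rule SUP_least)
      fix s assume "s \<in> range g0"
      then obtain t0 where s: "s = g0 t0" by auto
      obtain t' where "d (g0 t0) (g0' t') \<le> K0" using h1 by blast
      then show "(INF t\<in>range g0'. ereal (d s t)) \<le> ereal K0"
        unfolding s by (intro INF_lower2[of "g0' t'"]) auto
    qed
    have s2: "(SUP t\<in>range g0'. INF s\<in>range g0. ereal (d s t)) \<le> ereal K0"
    proof (rule SUP_least)
      fix t assume "t \<in> range g0'"
      then obtain t0 where t: "t = g0' t0" by auto
      obtain t' where "d (g0' t0) (g0 t') \<le> K0" using h2 by blast
      then have "d (g0 t') (g0' t0) \<le> K0" using Metric_space.commute[OF ms] by metis
      then show "(INF s\<in>range g0. ereal (d s t)) \<le> ereal K0"
        unfolding t by (intro INF_lower2[of "g0 t'"]) auto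
    qed
    have "mhausdist d (range g0) (range g0') \<le> ereal K0"
      unfolding mhausdist_def using s1 s2 by simp
    also have "\<dots> < ereal (K0 + 1)" by simp
    finally show "mhausdist d (range g0) (range g0') < ereal (K0 + 1)" .
  qed
qed



end
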